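(* Let $F$ be an algebraically closed field and $A$ a symmetric $F$-algebra with symmetrizing linear form $\lambda:A\to F$. Let $I$ be a two-sided ideal of $A$ such that $A/I$ is also a symmetric $F$-algebra, with symmetrizing linear form $\mu:A/I\to F$. Let $\nu:A\to A/I$, $a\mapsto a+I$, be the canonical epimorphism and let $\nu^\ast:A/I\to A$ be its adjoint with respect to $\lambda$ and $\mu$, i.e. the $F$-linear map satisfying $\lambda(\nu^\ast(x)a)=\mu(x\nu(a))$ for all $x\in A/I$, $a\in A$. If $L$ is an ideal of the center $\mathrm{Z}(A/I)$, then $\nu^\ast(L)$ is an ideal of the center $\mathrm{Z}(A)$.
   Context: A symmetrizing linear form on a finite-dimensional algebra $A$ is a linear form $\lambda$ such that $\lambda(ab)=\lambda(ba)$ for all $a,b$ and whose kernel contains no nonzero left (or right) ideal; equivalently $(a,b)\mapsto\lambda(ab)$ is a nondegenerate symmetric associative bilinear form. *)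

theory Defs
  imports Main "HOL-Computational_Algebra.Polynomial"
begin

definition alg_closed_field :: "'f::field itself \<Rightarrow> bool" where
  "alg_closed_field _ \<longleftrightarrow> (\<forall>p :: 'f poly. 0 < degree p \<longrightarrow> (\<exists>x. poly p x = 0))"

definition fd_algebra :: "('f::field \<Rightarrow> 'a::ring_1 \<Rightarrow> 'a) \<Rightarrow> bool" where
  "fd_algebra sc \<longleftrightarrow> vector_space sc
     \<and> (\<forall>c x y. sc c (x * y) = sc c x * y \<and> sc c (x * y) = x * sc c y)
     \<and> (\<exists>S. finite S \<and> module.span sc S = UNIV)"

definition left_ideal :: "'a::ring_1 set \<Rightarrow> bool" where
  "left_ideal J \<longleftrightarrow> 0 \<in> J \<and> (\<forall>x\<in>J. \<forall>y\<in>J. x + y \<in> J) \<and> (\<forall>a. \<forall>x\<in>J. a * x \<in> J)"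

definition two_sided_ideal :: "'a::ring_1 set \<Rightarrow> bool" where
  "two_sided_ideal J \<longleftrightarrow> left_ideal J \<and> (\<forall>a. \<forall>x\<in>J. x * a \<in> J)"

definition symmetrizing_form :: "('f::field \<Rightarrow> 'a::ring_1 \<Rightarrow> 'a) \<Rightarrow> ('a \<Rightarrow> 'f) \<Rightarrow> bool" where
  "symmetrizing_form sc lam \<longleftrightarrow> Vector_Spaces.linear sc (*) lam
     \<and> (\<forall>a b. lam (a * b) = lam (b * a))
     \<and> (\<forall>J. left_ideal J \<and> J \<subseteq> {a. lam a = 0} \<longrightarrow> J \<subseteq> {0})"

definition symmetric_algebra_with :: "('f::field \<Rightarrow> 'a::ring_1 \<Rightarrow> 'a) \<Rightarrow> ('a \<Rightarrow> 'f) \<Rightarrow> bool" where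
  "symmetric_algebra_with sc lam \<longleftrightarrow> fd_algebra sc \<and> symmetrizing_form sc lam"

definition algebra_hom :: "('f::field \<Rightarrow> 'a::ring_1 \<Rightarrow> 'a) \<Rightarrow> ('f \<Rightarrow> 'b::ring_1 \<Rightarrow> 'b) \<Rightarrow> ('a \<Rightarrow> 'b) \<Rightarrow> bool" where
  "algebra_hom scA scB h \<longleftrightarrow> Vector_Spaces.linear scA scB h
     \<and> (\<forall>x y. h (x * y) = h x * h y) \<and> h 1 = 1"

definition center :: "'a::ring_1 set" where
  "center = {z. \<forall>a. z * a = a * z}"

definition center_ideal :: "'a::ring_1 set \<Rightarrow> bool" where
  "center_ideal L \<longleftrightarrow> L \<subseteq> center \<and> 0 \<in> L \<and> (\<forall>x\<in>L. \<forall>y\<in>L. x + y \<in> L)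
     \<and> (\<forall>x\<in>L. - x \<in> L) \<and> (\<forall>z\<in>center. \<forall>x\<in>L. z * x \<in> L)"

end

theory Submission
  imports Defs
begin

lemma add0:
  fixes f :: "'x::ab_group_add \<Rightarrow> 'y::ab_group_add"
  assumes "\<forall>x y. f (x + y) = f x + f y"
  shows "f 0 = 0"
proof -
  have "f (0 + 0) = f 0 + f 0" using spec[OF spec[OF assms, of 0], of 0] .
  then have "f 0 + f 0 = f 0 + 0" by simp
  then show ?thesis by (rule add_left_imp_eq)
qed
lemma addneg:
  fixes f :: "'x::ab_group_add \<Rightarrow> 'y::ab_group_add"
  assumes "\<forall>x y. f (x + y) = f x + f y"
  shows "f (- x) = - f x"
proof -
  have "f (x + - x) = f x + f (- x)" using spec[OF spec[OF assms, of x], of "- x"] .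
  then have "f x + f (- x) = 0" using add0[OF assms] by simp
  then show ?thesis by (simp add: eq_neg_iff_add_eq_0 add.commute)
qed
lemma adddiff:
  fixes f :: "'x::ab_group_add \<Rightarrow> 'y::ab_group_add"
  assumes "\<forall>x y. f (x + y) = f x + f y"
  shows "f (x - y) = f x - f y"
proof -
  have "f (x + - y) = f x + f (- y)" using spec[OF spec[OF assms, of x], of "- y"] .
  then show ?thesis using addneg[OF assms, of y] by simp
qed

lemma lin_add:
  assumes "Vector_Spaces.linear s1 s2 f"
  shows "\<forall>x y. f (x + y) = f x + f y"
  using assms by (simp add: Vector_Spaces.linear_iff)

lemma nondeg:
  fixes lam :: "'a::ring_1 \<Rightarrow> 'f::field"
  assumes "symmetrizing_form sc lam" and "\<forall>c. lam (d * c) = 0"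
  shows "d = 0"
proof -
  have add: "\<forall>x y. lam (x + y) = lam x + lam y"
    using assms(1) unfolding symmetrizing_form_def by (simp add: Vector_Spaces.linear_iff)
  have sym: "\<forall>a b. lam (a * b) = lam (b * a)"
    using assms(1) unfolding symmetrizing_form_def by simp
  define J where "J = {y. \<forall>c. lam (y * c) = 0}"
  have J0: "0 \<in> J" unfolding J_def using add0[OF add] by simp
  have Jadd: "x + y \<in> J" if "x \<in> J" "y \<in> J" for x y
  proof -
    have "lam ((x + y) * c) = 0" for c
    proof -
      have "lam ((x + y) * c) = lam (x * c) + lam (y * c)"
        using spec[OF spec[OF add, of "x * c"], of "y * c"] by (simp add: distrib_right)
      then show ?thesis using that unfolding J_def by simp
    qed
    then show ?thesis unfolding J_def by simp
  qed
  have Jmul: "a * x \<in> J" if x: "x \<in> J" for a x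
  proof -
    have "lam (a * x * c) = 0" for c
    proof -
      have "lam (a * x * c) = lam (a * (x * c))" by (simp add: mult.assoc)
      also have "\<dots> = lam (x * c * a)" using spec[OF spec[OF sym, of a], of "x * c"] by simp
      also have "\<dots> = 0" using x unfolding J_def by (simp add: mult.assoc)
      finally show "lam (a * x * c) = 0" .
    qed
    then show ?thesis unfolding J_def by simp
  qed
  have "left_ideal J" unfolding left_ideal_def using J0 Jadd Jmul by blast
  moreover have "J \<subseteq> {a. lam a = 0}" unfolding J_def by (force dest: spec[of _ 1])
  ultimately have "J \<subseteq> {0}" using assms(1) unfolding symmetrizing_form_def by blast
  moreover have "d \<in> J" using assms(2) J_def by simp
  ultimately show ?thesis by blast
qed

theorem proposition2:
  fixes scA :: "'f::field \<Rightarrow> 'a::ring_1 \<Rightarrow> 'a"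
    and scB :: "'f \<Rightarrow> 'b::ring_1 \<Rightarrow> 'b"
    and lam :: "'a \<Rightarrow> 'f" and mu :: "'b \<Rightarrow> 'f"
    and I :: "'a set" and nu :: "'a \<Rightarrow> 'b" and nustar :: "'b \<Rightarrow> 'a"
    and L :: "'b set"
  assumes "alg_closed_field TYPE('f)"
    and "symmetric_algebra_with scA lam"
    and "two_sided_ideal I"
    and "symmetric_algebra_with scB mu"
    and "algebra_hom scA scB nu" and "surj nu" and "{a. nu a = 0} = I"
    and "Vector_Spaces.linear scB scA nustar"
    and "\<forall>x a. lam (nustar x * a) = mu (x * nu a)"
    and "center_ideal L"
  shows "center_ideal (nustar ` L)"
proof -
  have sfA: "symmetrizing_form scA lam" using assms(2) by (simp add: symmetric_algebra_with_def)
  have sfB: "symmetrizing_form scB mu" using assms(4) by (simp add: symmetric_algebra_with_def)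
  have addA: "\<forall>x y. lam (x + y) = lam x + lam y"
    using sfA unfolding symmetrizing_form_def by (simp add: Vector_Spaces.linear_iff)
  have symA: "\<And>a b. lam (a * b) = lam (b * a)"
    using sfA unfolding symmetrizing_form_def by simp
  have symB: "\<And>a b. mu (a * b) = mu (b * a)"
    using sfB unfolding symmetrizing_form_def by simp
  have addS: "\<forall>x y. nustar (x + y) = nustar x + nustar y" using lin_add[OF assms(8)] .
  have numul: "\<And>x y. nu (x * y) = nu x * nu y" using assms(5) by (simp add: algebra_hom_def)
  have adj: "\<And>x a. lam (nustar x * a) = mu (x * nu a)" using assms(9) by blast
  have Lc: "L \<subseteq> center" and L0: "0 \<in> L" and Ladd: "\<forall>x\<in>L. \<forall>y\<in>L. x + y \<in> L"
    and Lneg: "\<forall>x\<in>L. - x \<in> L" and Lmul: "\<forall>z\<in>center. \<forall>x\<in>L. z * x \<in> L"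
    using assms(10) unfolding center_ideal_def by auto
  have eqI: "u = v" if h: "\<And>c. lam (u * c) = lam (v * c)" for u v :: 'a
  proof -
    have "\<forall>c. lam ((u - v) * c) = 0"
      using h adddiff[OF addA] by (simp add: left_diff_distrib)
    then have "u - v = 0" by (rule nondeg[OF sfA])
    then show ?thesis by simp
  qed
  have cent: "nustar x \<in> center" if "x \<in> L" for x :: 'b
  proof -
    have xc: "\<And>b. x * b = b * x" using that Lc unfolding center_def by auto
    have "nustar x * a = a * nustar x" for a
    proof (rule eqI)
      fix c
      have "lam (nustar x * a * c) = mu (x * (nu a * nu c))"
        by (simp add: mult.assoc adj numul)
      also have "\<dots> = mu (nu a * x * nu c)" by (simp add: xc mult.assoc)
      also have "\<dots> = mu (x * nu c * nu a)" using symB[of "nu a" "x * nu c"] by (simp add: mult.assoc)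
      also have "\<dots> = lam (nustar x * (c * a))" by (simp add: adj numul mult.assoc)
      also have "\<dots> = lam (a * nustar x * c)" using symA[of "nustar x * c" a] by (simp add: mult.assoc)
      finally show "lam (nustar x * a * c) = lam (a * nustar x * c)" .
    qed
    then show ?thesis unfolding center_def by auto
  qed
  have mulz: "z * nustar x = nustar (nu z * x)" if z: "z \<in> center" and x: "x \<in> L" for z :: 'a and x :: 'b
  proof -
    have zc: "\<And>b. nu z * b = b * nu z"
    proof -
      fix b
      obtain a where a: "b = nu a" using assms(6) by (metis surjD)
      have "z * a = a * z" using z unfolding center_def by blast
      then show "nu z * b = b * nu z" using a numul by metis
    qed
    show ?thesis
    proof (rule eqI)
      fix c
      have "lam (z * nustar x * c) = lam (nustar x * (c * z))" using symA[of z "nustar x * c"] by (simp add: mult.assoc)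
      also have "\<dots> = mu (x * nu c * nu z)" by (simp add: adj numul mult.assoc)
      also have "\<dots> = mu (nu z * x * nu c)" using symB[of "x * nu c" "nu z"] by (simp add: mult.assoc)
      also have "\<dots> = lam (nustar (nu z * x) * c)" by (simp add: adj)
      finally show "lam (z * nustar x * c) = lam (nustar (nu z * x) * c)" .
    qed
  qed
  show ?thesis
    unfolding center_ideal_def
  proof (intro conjI ballI)
    show "nustar ` L \<subseteq> center" using cent by auto
    show "0 \<in> nustar ` L" using L0 add0[OF addS] by force
  next
    fix u v assume "u \<in> nustar ` L" "v \<in> nustar ` L"
    then obtain x y where "x \<in> L" "y \<in> L" "u = nustar x" "v = nustar y" by auto
    then have "u + v = nustar (x + y)" "x + y \<in> L" using Ladd addS by auto
    then show "u + v \<in> nustar ` L" by blast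
  next
    fix u assume "u \<in> nustar ` L"
    then obtain x where "x \<in> L" "u = nustar x" by auto
    then have "- u = nustar (- x)" "- x \<in> L" using Lneg addneg[OF addS] by auto
    then show "- u \<in> nustar ` L" by blast
  next
    fix z :: 'a and u assume z: "z \<in> center" and "u \<in> nustar ` L"
    then obtain x where x: "x \<in> L" "u = nustar x" by auto
    have "nu z \<in> center"
      unfolding center_def
    proof (intro CollectI allI)
      fix b
      obtain a where a: "b = nu a" using assms(6) by (metis surjD)
      have "z * a = a * z" using z unfolding center_def by blast
      then show "nu z * b = b * nu z" using a numul by metis
    qed
    then show "z * u \<in> nustar ` L" using mulz[OF z x(1)] x Lmul by auto
  qed
qed

end
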